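(* Let $\pi$ be a permutation of an ordinary set $[k]$ (all letters distinct). Then there exists a constant $e_\pi$ such that for all integers $n\geq1$ and $l\geq n$: (i) for every $\mu:[n]\to\mathbb N\setminus\{0\}$ with $\sum_{i=1}^n\mu(i)=l$, the number $s_\mu(\pi)$ of permutations of the multiset $\{1^{\mu(1)},\ldots,n^{\mu(n)}\}$ avoiding $\pi$ satisfies $s_\mu(\pi)\leq e_\pi^{\,l}$; and (ii) the number $w_{l,n}(\pi)$ of words of length $l$ over the alphabet $[n]$ avoiding $\pi$ satisfies $w_{l,n}(\pi)\leq e_\pi^{\,l}$.
   Context: A permutation of the multiset $\{1^{\mu(1)},\ldots,n^{\mu(n)}\}$ is a sequence of length $\sum_i\mu(i)$ in which each $i\in[n]$ appears exactly $\mu(i)$ times. A word of length $l$ over $[n]$ is any sequence in $[n]^l$. A sequence $\sigma$ avoids $\pi=\pi_1\cdots\pi_k$ if there are no indices $i_1<\cdots<i_k$ with $\sigma_{i_a}<\sigma_{i_b}\iff\pi_a<\pi_b$ and $\sigma_{i_a}=\sigma_{i_b}\iff\pi_a=\pi_b$ for all $a,b$. *)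

theory Defs
  imports Complex_Main
begin

definition contains :: "nat list \<Rightarrow> nat list \<Rightarrow> bool" where
  "contains \<sigma> p \<longleftrightarrow>
     (\<exists>is :: nat list. length is = length p \<and> sorted_wrt (<) is \<and>
        (\<forall>j\<in>set is. j < length \<sigma>) \<and>
        (\<forall>a<length p. \<forall>b<length p.
            (\<sigma> ! (is ! a) < \<sigma> ! (is ! b) \<longleftrightarrow> p ! a < p ! b) \<and>
            (\<sigma> ! (is ! a) = \<sigma> ! (is ! b) \<longleftrightarrow> p ! a = p ! b)))"

definition avoids :: "nat list \<Rightarrow> nat list \<Rightarrow> bool" where
  "avoids \<sigma> p \<longleftrightarrow> \<not> contains \<sigma> p"

definition multiset_perms :: "nat \<Rightarrow> (nat \<Rightarrow> nat) \<Rightarrow> nat list set" where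
  "multiset_perms n \<mu> = {\<sigma>. set \<sigma> \<subseteq> {1..n} \<and> (\<forall>i\<in>{1..n}. count_list \<sigma> i = \<mu> i)}"

definition s_count :: "nat \<Rightarrow> (nat \<Rightarrow> nat) \<Rightarrow> nat list \<Rightarrow> nat" where
  "s_count n \<mu> p = card {\<sigma> \<in> multiset_perms n \<mu>. avoids \<sigma> p}"

definition w_count :: "nat \<Rightarrow> nat \<Rightarrow> nat list \<Rightarrow> nat" where
  "w_count l n p = card {\<sigma>. length \<sigma> = l \<and> set \<sigma> \<subseteq> {1..n} \<and> avoids \<sigma> p}"

end

theory Submission
  imports Defs
begin


definition smono :: "nat \<Rightarrow> (nat \<Rightarrow> nat) \<Rightarrow> bool" where
  "smono k f \<longleftrightarrow> (\<forall>i j. i < j \<longrightarrow> j < k \<longrightarrow> f i < f j)"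

definition cont :: "(nat \<Rightarrow> nat) \<Rightarrow> nat \<Rightarrow> (nat \<times> nat) set \<Rightarrow> bool" where
  "cont p k S \<longleftrightarrow> (\<exists>x y. smono k x \<and> smono k y \<and> (\<forall>i<k. (x i, y (p i)) \<in> S))"

definition ipair :: "(nat \<Rightarrow> nat) \<Rightarrow> (nat \<Rightarrow> nat) \<Rightarrow> nat \<Rightarrow> bool" where
  "ipair p r k \<longleftrightarrow> (\<forall>i<k. p i < k \<and> r i < k \<and> r (p i) = i \<and> p (r i) = i)"

definition contract :: "nat \<Rightarrow> (nat \<times> nat) set \<Rightarrow> (nat \<times> nat) set" where
  "contract q S = (\<lambda>(a,b). (a div q, b div q)) ` S"

definition blk :: "nat \<Rightarrow> (nat \<times> nat) set \<Rightarrow> nat \<times> nat \<Rightarrow> (nat \<times> nat) set" where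
  "blk q S b = {u\<in>S. fst u div q = fst b \<and> snd u div q = snd b}"

lemma smono_less_iff:
  assumes "smono k f" "i < k" "j < k"
  shows "f i < f j \<longleftrightarrow> i < j"
  using assms unfolding smono_def
  by (metis less_asym' linorder_neqE_nat)

lemma smono_eq_iff:
  assumes "smono k f" "i < k" "j < k"
  shows "f i = f j \<longleftrightarrow> i = j"
  using assms unfolding smono_def
  by (metis less_irrefl linorder_neqE_nat)

lemma ipair_swap: "ipair p r k \<Longrightarrow> ipair r p k"
  unfolding ipair_def by auto

lemma enum_exists:
  assumes "finite A" "k \<le> card A"
  shows "\<exists>f. smono k f \<and> (\<forall>i<k. f i \<in> A)"
proof -
  let ?xs = "sorted_list_of_set A"
  have s: "sorted_wrt (<) ?xs" by (simp add: strict_sorted_list_of_set)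
  have l: "length ?xs = card A" by simp
  have "smono k (\<lambda>i. ?xs ! i)"
    unfolding smono_def using s l assms(2)
    by (metis order_less_le_trans sorted_wrt_nth_less)
  moreover have "\<forall>i<k. ?xs ! i \<in> A"
    using l assms by (metis order_less_le_trans nth_mem set_sorted_list_of_set)
  ultimately show ?thesis by blast
qed

lemma cont_mono: "cont p k S \<Longrightarrow> S \<subseteq> T \<Longrightarrow> cont p k T"
  unfolding cont_def by blast

lemma cont_swap:
  assumes "ipair p r k" "cont r k (prod.swap ` S)"
  shows "cont p k S"
proof -
  from assms(2) obtain x y where xy: "smono k x" "smono k y" "\<forall>i<k. (x i, y (r i)) \<in> prod.swap ` S"
    unfolding cont_def by blast
  have "\<forall>i<k. (y i, x (p i)) \<in> S"
  proof (intro allI impI)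
    fix i assume i: "i < k"
    then have "p i < k" "r (p i) = i" using assms(1) unfolding ipair_def by auto
    then have "(x (p i), y i) \<in> prod.swap ` S" using xy(3) by metis
    then show "(y i, x (p i)) \<in> S" by auto
  qed
  then show ?thesis unfolding cont_def using xy by blast
qed

lemma div_less_div_imp: "(a::nat) div q < b div q \<Longrightarrow> a < b"
  by (metis div_le_mono le_less_trans less_irrefl not_le_imp_less)

lemma contract_cont:
  assumes "ipair p r k" "cont p k (contract q S)"
  shows "cont p k S"
proof -
  from assms(2) obtain x y where xy: "smono k x" "smono k y" "\<forall>i<k. (x i, y (p i)) \<in> contract q S"
    unfolding cont_def by blast
  have "\<forall>i<k. \<exists>u\<in>S. fst u div q = x i \<and> snd u div q = y (p i)"
    using xy(3) unfolding contract_def by force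
  then obtain f where f: "\<forall>i<k. f i \<in> S \<and> fst (f i) div q = x i \<and> snd (f i) div q = y (p i)"
    by metis
  define x' where "x' i = fst (f i)" for i
  define y' where "y' j = snd (f (r j))" for j
  have "smono k x'" unfolding smono_def x'_def
    using xy(1) f unfolding smono_def
    by (metis div_less_div_imp order.strict_trans)
  moreover have "smono k y'" unfolding smono_def
  proof (intro allI impI)
    fix i j assume ij: "i < j" "j < k"
    then have "r i < k" "r j < k" "p (r i) = i" "p (r j) = j" using assms(1) unfolding ipair_def by auto
    then have "snd (f (r i)) div q = y i" "snd (f (r j)) div q = y j" using f by metis+
    moreover have "y i < y j" using xy(2) ij unfolding smono_def by blast
    ultimately show "y' i < y' j" unfolding y'_def using div_less_div_imp by metis
  qed
  moreover have "\<forall>i<k. (x' i, y' (p i)) \<in> S"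
  proof (intro allI impI)
    fix i assume "i < k"
    then have "r (p i) = i" using assms(1) unfolding ipair_def by auto
    then show "(x' i, y' (p i)) \<in> S" unfolding x'_def y'_def using f \<open>i<k\<close> by simp
  qed
  ultimately show ?thesis unfolding cont_def by blast
qed




lemma div_eq_range: "(u::nat) div q = a \<Longrightarrow> 0 < q \<Longrightarrow> u \<in> {a*q..<a*q+q}"
  by (metis atLeastLessThan_iff add.commute dividend_less_times_div div_times_less_eq_dividend mult.commute)

lemma finite_blk: "finite S \<Longrightarrow> finite (blk q S b)"
  unfolding blk_def by simp

lemma wide_col:
  assumes ip: "ipair p r k" and nc: "\<not> cont p k S" and fin: "finite S" and q: "0 < q"
  shows "card {b \<in> contract q S. fst b = a \<and> k \<le> card (fst ` blk q S b)} \<le> (k-1) * (q choose k)"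
proof -
  define W where "W = {b \<in> contract q S. fst b = a \<and> k \<le> card (fst ` blk q S b)}"
  have finW: "finite W" unfolding W_def contract_def using fin by simp
  have "\<forall>b\<in>W. \<exists>X. X \<subseteq> fst ` blk q S b \<and> card X = k"
    unfolding W_def by (metis (no_types, lifting) mem_Collect_eq obtain_subset_with_card_n)
  then obtain Xf where Xf: "\<forall>b\<in>W. Xf b \<subseteq> fst ` blk q S b \<and> card (Xf b) = k" by metis
  define D where "D = {X. X \<subseteq> {a*q..<a*q+q} \<and> card X = k}"
  have cardD: "card D = q choose k" unfolding D_def using n_subsets[of "{a*q..<a*q+q}" k] by simp
  have XD: "Xf ` W \<subseteq> D"
  proof
    fix X assume "X \<in> Xf ` W"
    then obtain b where b: "b \<in> W" "X = Xf b" by blast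
    have "fst ` blk q S b \<subseteq> {a*q..<a*q+q}"
    proof
      fix x assume "x \<in> fst ` blk q S b"
      then have "x div q = a" using b(1) unfolding W_def blk_def by auto
      then show "x \<in> {a*q..<a*q+q}" using div_eq_range q by blast
    qed
    then show "X \<in> D" using Xf b unfolding D_def by blast
  qed
  have fib: "card {b\<in>W. Xf b = X} \<le> k - 1" if X: "X \<in> Xf ` W" for X
  proof (rule ccontr)
    define F where "F = {b\<in>W. Xf b = X}"
    assume "\<not> card {b\<in>W. Xf b = X} \<le> k - 1"
    then have kF: "k \<le> card F" unfolding F_def by linarith
    have finF: "finite F" using finW unfolding F_def by simp
    have injF: "inj_on snd F"
      unfolding F_def W_def by (intro inj_onI) (auto simp: prod_eq_iff)
    have "k \<le> card (snd ` F)" using kF card_image[OF injF] by simp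
    then obtain yb where yb: "smono k yb" "\<forall>j<k. yb j \<in> snd ` F"
      using enum_exists finF by (meson finite_imageI)
    obtain b0 where b0: "b0 \<in> W" "X = Xf b0" using X by blast
    then have "card X = k" "finite X" using Xf
      by (auto intro: finite_subset[OF _ finite_imageI[OF finite_blk[OF fin]]])
    then obtain xe where xe: "smono k xe" "\<forall>i<k. xe i \<in> X"
      using enum_exists by (metis order_refl)
    have "\<forall>j<k. \<exists>u\<in>blk q S (a, yb j). fst u = xe (r j)"
    proof (intro allI impI)
      fix j assume j: "j < k"
      then have rj: "r j < k" using ip unfolding ipair_def by auto
      have "(a, yb j) \<in> F" using yb(2) j unfolding F_def W_def by force
      then have "X \<subseteq> fst ` blk q S (a, yb j)" using Xf unfolding F_def by auto
      then show "\<exists>u\<in>blk q S (a, yb j). fst u = xe (r j)" using xe(2) rj by force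
    qed
    then obtain g where g: "\<forall>j<k. g j \<in> blk q S (a, yb j) \<and> fst (g j) = xe (r j)" by metis
    define y where "y j = snd (g j)" for j
    have "smono k y" unfolding smono_def
    proof (intro allI impI)
      fix i j assume ij: "i < j" "j < k"
      have "snd (g i) div q = yb i" "snd (g j) div q = yb j"
        using g ij unfolding blk_def by auto
      moreover have "yb i < yb j" using yb(1) ij unfolding smono_def by blast
      ultimately show "y i < y j" unfolding y_def using div_less_div_imp by metis
    qed
    moreover have "\<forall>i<k. (xe i, y (p i)) \<in> S"
    proof (intro allI impI)
      fix i assume i: "i < k"
      then have "p i < k" "r (p i) = i" using ip unfolding ipair_def by auto
      then have "g (p i) \<in> S" "fst (g (p i)) = xe i" using g unfolding blk_def by auto
      then show "(xe i, y (p i)) \<in> S" unfolding y_def by (metis prod.collapse)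
    qed
    ultimately have "cont p k S" unfolding cont_def using xe(1) by blast
    then show False using nc by simp
  qed
  have "W = (\<Union>X\<in>Xf ` W. {b\<in>W. Xf b = X})" by blast
  then have "card W \<le> (\<Sum>X\<in>Xf ` W. card {b\<in>W. Xf b = X})"
    by (metis card_UN_le finW finite_imageI)
  also have "\<dots> \<le> (\<Sum>X\<in>Xf ` W. k - 1)" by (rule sum_mono) (use fib in auto)
  also have "\<dots> = card (Xf ` W) * (k - 1)" by simp
  also have "\<dots> \<le> card D * (k - 1)"
    using XD by (intro mult_right_mono card_mono) (auto simp: D_def)
  finally show ?thesis unfolding W_def using cardD by (simp add: mult.commute)
qed




lemma wide_total:
  assumes ip: "ipair p r k" and nc: "\<not> cont p k S" and fin: "finite S" and q: "0 < q"
    and sub: "S \<subseteq> {..<q*N} \<times> {..<q*N}"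
  shows "card {b \<in> contract q S. k \<le> card (fst ` blk q S b)} \<le> N * ((k-1) * (q choose k))"
proof -
  have "{b \<in> contract q S. k \<le> card (fst ` blk q S b)} \<subseteq>
        (\<Union>a\<in>{..<N}. {b \<in> contract q S. fst b = a \<and> k \<le> card (fst ` blk q S b)})"
  proof
    fix b assume b: "b \<in> {b \<in> contract q S. k \<le> card (fst ` blk q S b)}"
    then obtain u v where "(u,v) \<in> S" "b = (u div q, v div q)" unfolding contract_def by auto
    then have "fst b < N" using sub q by (auto simp: less_mult_imp_div_less mult.commute)
    then show "b \<in> (\<Union>a\<in>{..<N}. {b \<in> contract q S. fst b = a \<and> k \<le> card (fst ` blk q S b)})"
      using b by auto
  qed
  then have "card {b \<in> contract q S. k \<le> card (fst ` blk q S b)} \<le>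
        card (\<Union>a\<in>{..<N}. {b \<in> contract q S. fst b = a \<and> k \<le> card (fst ` blk q S b)})"
    by (intro card_mono) (auto simp: contract_def fin)
  also have "\<dots> \<le> (\<Sum>a\<in>{..<N}. card {b \<in> contract q S. fst b = a \<and> k \<le> card (fst ` blk q S b)})"
    by (rule card_UN_le) simp
  also have "\<dots> \<le> (\<Sum>a\<in>{..<N}. (k-1) * (q choose k))"
    by (rule sum_mono) (rule wide_col[OF ip nc fin q])
  finally show ?thesis by simp
qed

lemma blk_swap: "blk q (prod.swap ` S) b = prod.swap ` blk q S (prod.swap b)"
  unfolding blk_def by (auto simp: image_iff)

lemma contract_swap: "contract q (prod.swap ` S) = prod.swap ` contract q S"
  unfolding contract_def by (force simp: image_iff)

lemma tall_total:
  assumes ip: "ipair p r k" and nc: "\<not> cont p k S" and fin: "finite S" and q: "0 < q"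
    and sub: "S \<subseteq> {..<q*N} \<times> {..<q*N}"
  shows "card {b \<in> contract q S. k \<le> card (snd ` blk q S b)} \<le> N * ((k-1) * (q choose k))"
proof -
  have ip2: "ipair r p k" using ipair_swap ip .
  have nc2: "\<not> cont r k (prod.swap ` S)" using cont_swap[OF ip] nc by blast
  have sub2: "prod.swap ` S \<subseteq> {..<q*N} \<times> {..<q*N}" using sub by auto
  have eq: "{b \<in> contract q (prod.swap ` S). k \<le> card (fst ` blk q (prod.swap ` S) b)}
      = prod.swap ` {b \<in> contract q S. k \<le> card (snd ` blk q S b)}"
  proof -
    have "\<And>b. fst ` blk q (prod.swap ` S) b = snd ` blk q S (prod.swap b)"
      unfolding blk_swap image_image by simp
    then show ?thesis unfolding contract_swap by (force simp: image_iff)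
  qed
  have "card (prod.swap ` {b \<in> contract q S. k \<le> card (snd ` blk q S b)}) \<le> N * ((k-1) * (q choose k))"
    using wide_total[OF ip2 nc2 _ q sub2] fin unfolding eq by simp
  then show ?thesis by (simp add: card_image)
qed




lemma card_blk_le_q2:
  assumes "finite S" "0 < q"
  shows "card (blk q S b) \<le> q^2"
proof -
  have "blk q S b \<subseteq> {fst b*q..<fst b*q+q} \<times> {snd b*q..<snd b*q+q}"
  proof
    fix u assume "u \<in> blk q S b"
    then have "fst u div q = fst b" "snd u div q = snd b" unfolding blk_def by auto
    then have "fst u \<in> {fst b*q..<fst b*q+q}" "snd u \<in> {snd b*q..<snd b*q+q}"
      using div_eq_range[OF _ assms(2)] by blast+
    then show "u \<in> {fst b*q..<fst b*q+q} \<times> {snd b*q..<snd b*q+q}" by (simp add: mem_Times_iff)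
  qed
  then have "card (blk q S b) \<le> card ({fst b*q..<fst b*q+q} \<times> {snd b*q..<snd b*q+q})"
    by (intro card_mono) auto
  then show ?thesis by (simp add: card_cartesian_product power2_eq_square)
qed

lemma card_blk_small:
  assumes "finite S" "\<not> k \<le> card (fst ` blk q S b)" "\<not> k \<le> card (snd ` blk q S b)"
  shows "card (blk q S b) \<le> (k-1)^2"
proof -
  have "blk q S b \<subseteq> fst ` blk q S b \<times> snd ` blk q S b" by (force simp: mem_Times_iff)
  then have "card (blk q S b) \<le> card (fst ` blk q S b \<times> snd ` blk q S b)"
    using assms(1) by (intro card_mono) (auto simp: finite_blk)
  also have "\<dots> = card (fst ` blk q S b) * card (snd ` blk q S b)" by (simp add: card_cartesian_product)
  also have "\<dots> \<le> (k-1) * (k-1)" using assms(2,3) by (intro mult_le_mono) auto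
  finally show ?thesis by (simp add: power2_eq_square)
qed

lemma ones_bound:
  assumes ip: "ipair p r k" and q: "0 < q" and c: "1 \<le> c"
    and hc: "(k-1)^2*c + 2*q^2*((k-1)*(q choose k)) \<le> c*q"
  shows "S \<subseteq> {..<q^m}\<times>{..<q^m} \<Longrightarrow> \<not> cont p k S \<Longrightarrow> card S \<le> c*q^m"
proof (induction m arbitrary: S)
  case 0
  then have "S \<subseteq> {(0,0)}" by auto
  then have "card S \<le> 1" using card_mono[of "{(0,0)}" S] by simp
  then show ?case using c by simp
next
  case (Suc m S)
  define N where "N = q^m"
  have sub: "S \<subseteq> {..<q*N}\<times>{..<q*N}" using Suc.prems(1) by (simp add: N_def)
  have fin: "finite S" using finite_subset[OF sub] by blast
  define B where "B = contract q S"
  have finB: "finite B" unfolding B_def contract_def using fin by simp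
  have subB: "B \<subseteq> {..<q^m}\<times>{..<q^m}"
    using sub q unfolding B_def contract_def N_def
    by (force simp: less_mult_imp_div_less mult.commute)
  have ncB: "\<not> cont p k B" using contract_cont[OF ip] Suc.prems(2) unfolding B_def by blast
  have cB: "card B \<le> c*N" using Suc.IH[OF subB ncB] by (simp add: N_def)
  define W where "W = {b \<in> B. k \<le> card (fst ` blk q S b)}"
  define T where "T = {b \<in> B. k \<le> card (snd ` blk q S b)}"
  define X where "X = (k-1) * (q choose k)"
  have cW: "card W \<le> N * X" unfolding W_def B_def X_def
    using wide_total[OF ip Suc.prems(2) fin q sub] .
  have cT: "card T \<le> N * X" unfolding T_def B_def X_def
    using tall_total[OF ip Suc.prems(2) fin q sub] .
  have "S \<subseteq> (\<Union>b\<in>B. blk q S b)" unfolding B_def contract_def blk_def by force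
  then have "card S \<le> card (\<Union>b\<in>B. blk q S b)"
    using finB fin by (intro card_mono) (auto simp: finite_blk)
  also have "\<dots> \<le> (\<Sum>b\<in>B. card (blk q S b))" by (rule card_UN_le[OF finB])
  also have "\<dots> \<le> (\<Sum>b\<in>B. (if b \<in> W then q^2 else 0) + (if b \<in> T then q^2 else 0) + (k-1)^2)"
  proof (rule sum_mono)
    fix b assume "b \<in> B"
    show "card (blk q S b) \<le> (if b \<in> W then q^2 else 0) + (if b \<in> T then q^2 else 0) + (k-1)^2"
    proof (cases "b \<in> W \<or> b \<in> T")
      case True
      then show ?thesis using card_blk_le_q2[OF fin q, of b] by auto
    next
      case False
      then show ?thesis using card_blk_small[OF fin, of k q b] \<open>b\<in>B\<close> unfolding W_def T_def by auto
    qed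
  qed
  also have "\<dots> = q^2 * card W + q^2 * card T + (k-1)^2 * card B"
  proof -
    have "W \<subseteq> B" "T \<subseteq> B" unfolding W_def T_def by auto
    then have "B \<inter> W = W" "B \<inter> T = T" by auto
    then show ?thesis
      using sum.inter_restrict[OF finB, of "\<lambda>_. q^2" W, symmetric]
        sum.inter_restrict[OF finB, of "\<lambda>_. q^2" T, symmetric]
      by (simp add: sum.distrib mult.commute)
  qed
  also have "\<dots> \<le> q^2 * (N*X) + q^2 * (N*X) + (k-1)^2 * (c*N)"
    using cW cT cB by (intro add_le_mono mult_le_mono) auto
  also have "\<dots> = N * ((k-1)^2*c + 2*q^2*X)" by (simp add: algebra_simps)
  also have "\<dots> \<le> N * (c*q)" using hc unfolding X_def by (intro mult_le_mono) auto
  also have "\<dots> = c * q^Suc m" by (simp add: N_def algebra_simps)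
  finally show ?case .
qed




definition Av :: "(nat \<Rightarrow> nat) \<Rightarrow> nat \<Rightarrow> nat \<Rightarrow> (nat \<times> nat) set set" where
  "Av p k N = {S. S \<subseteq> {..<N}\<times>{..<N} \<and> \<not> cont p k S}"

lemma finite_Av: "finite (Av p k N)"
  unfolding Av_def by (rule finite_subset[of _ "Pow ({..<N}\<times>{..<N})"]) auto

lemma finite_Av_mem: "S \<in> Av p k N \<Longrightarrow> finite S"
  unfolding Av_def by (auto intro: finite_subset)

lemma Av_mono: "N \<le> M \<Longrightarrow> Av p k N \<subseteq> Av p k M"
  unfolding Av_def by auto

lemma count_step:
  assumes ip: "ipair p r k" and q: "0 < q"
    and ob: "\<forall>S\<in>Av p k (q^m). card S \<le> c*q^m"
  shows "card (Av p k (q^Suc m)) \<le> card (Av p k (q^m)) * 2^(q^2*(c*q^m))"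
proof -
  define full where "full b = {fst b*q..<fst b*q+q} \<times> {snd b*q..<snd b*q+q}" for b :: "nat\<times>nat"
  have cfull: "card (full b) = q^2" for b unfolding full_def by (simp add: card_cartesian_product power2_eq_square)
  have "Av p k (q^Suc m) \<subseteq> (\<Union>B\<in>Av p k (q^m). Pow (\<Union>b\<in>B. full b))"
  proof
    fix S assume S: "S \<in> Av p k (q^Suc m)"
    then have sub: "S \<subseteq> {..<q*q^m}\<times>{..<q*q^m}" and nc: "\<not> cont p k S" unfolding Av_def by auto
    have subB: "contract q S \<subseteq> {..<q^m}\<times>{..<q^m}"
      using sub q unfolding contract_def
      by (force simp: less_mult_imp_div_less mult.commute)
    have ncB: "\<not> cont p k (contract q S)" using contract_cont[OF ip] nc by blast
    have B: "contract q S \<in> Av p k (q^m)" using subB ncB unfolding Av_def by auto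
    have "S \<subseteq> (\<Union>b\<in>contract q S. full b)"
    proof
      fix u assume u: "u \<in> S"
      let ?b = "(fst u div q, snd u div q)"
      have "?b \<in> contract q S" using u unfolding contract_def by (intro image_eqI[of _ _ u]) (auto simp: case_prod_beta)
      moreover have "fst u \<in> {fst ?b*q..<fst ?b*q+q}" "snd u \<in> {snd ?b*q..<snd ?b*q+q}"
        using div_eq_range[OF _ q] by simp_all
      then have "u \<in> full ?b" unfolding full_def by (simp add: mem_Times_iff)
      ultimately show "u \<in> (\<Union>b\<in>contract q S. full b)" by blast
    qed
    then show "S \<in> (\<Union>B\<in>Av p k (q^m). Pow (\<Union>b\<in>B. full b))" using B by blast
  qed
  then have "card (Av p k (q^Suc m)) \<le> card (\<Union>B\<in>Av p k (q^m). Pow (\<Union>b\<in>B. full b))"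
    by (intro card_mono) (auto simp: finite_Av full_def dest: finite_Av_mem)
  also have "\<dots> \<le> (\<Sum>B\<in>Av p k (q^m). card (Pow (\<Union>b\<in>B. full b)))"
    by (rule card_UN_le[OF finite_Av])
  also have "\<dots> \<le> (\<Sum>B\<in>Av p k (q^m). 2^(q^2*(c*q^m)))"
  proof (rule sum_mono)
    fix B assume B: "B \<in> Av p k (q^m)"
    have finB: "finite B" using B unfolding Av_def by (auto intro: finite_subset)
    have finU: "finite (\<Union>b\<in>B. full b)" using finB unfolding full_def by auto
    have "card (\<Union>b\<in>B. full b) \<le> (\<Sum>b\<in>B. card (full b))" by (rule card_UN_le[OF finB])
    also have "\<dots> = card B * q^2" by (simp add: cfull)
    also have "\<dots> \<le> (c*q^m) * q^2" using ob B by (intro mult_le_mono) auto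
    finally have "card (\<Union>b\<in>B. full b) \<le> q^2*(c*q^m)" by (simp add: mult.commute)
    then show "card (Pow (\<Union>b\<in>B. full b)) \<le> 2^(q^2*(c*q^m))"
      using finU by (simp add: card_Pow power_increasing)
  qed
  also have "\<dots> = card (Av p k (q^m)) * 2^(q^2*(c*q^m))" by simp
  finally show ?thesis .
qed

lemma count_bound:
  assumes ip: "ipair p r k" and q: "2 \<le> q" and c: "1 \<le> c"
    and hc: "(k-1)^2*c + 2*q^2*((k-1)*(q choose k)) \<le> c*q"
  shows "card (Av p k (q^m)) \<le> (2^(q^2*c+1))^(q^m)"
proof (induction m)
  case 0
  have "Av p k 1 \<subseteq> Pow {(0,0)}" unfolding Av_def by auto
  then have "card (Av p k 1) \<le> card (Pow {(0::nat,0::nat)})" by (intro card_mono) auto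
  also have "\<dots> = 2" by (simp add: card_Pow)
  also have "2 \<le> (2::nat)^(q^2*c+1)" using one_le_power[of 2] by simp
  finally show ?case by simp
next
  case (Suc m)
  define D :: nat where "D = 2^(q^2*c+1)"
  have D1: "1 \<le> D" unfolding D_def by simp
  have ob: "\<forall>S\<in>Av p k (q^m). card S \<le> c*q^m"
    using ones_bound[OF ip _ c hc] q unfolding Av_def by auto
  have "card (Av p k (q^Suc m)) \<le> card (Av p k (q^m)) * 2^(q^2*(c*q^m))"
    using count_step[OF ip _ ob] q by simp
  also have "\<dots> \<le> D^(q^m) * D^(q^m)"
  proof (intro mult_le_mono)
    show "card (Av p k (q^m)) \<le> D^(q^m)" using Suc.IH unfolding D_def .
    have "(2::nat)^(q^2*(c*q^m)) \<le> 2^((q^2*c+1)*q^m)"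
      by (intro power_increasing) (auto simp: algebra_simps)
    then show "(2::nat)^(q^2*(c*q^m)) \<le> D^(q^m)" unfolding D_def by (simp add: power_mult)
  qed
  also have "\<dots> = D^(2*q^m)" by (simp add: power_add[symmetric] mult_2)
  also have "\<dots> \<le> D^(q*q^m)" using D1 q by (intro power_increasing) auto
  finally show ?case unfolding D_def by simp
qed




lemma exists_pow_between:
  assumes q: "2 \<le> (q::nat)" and N: "1 \<le> N"
  shows "\<exists>m. N \<le> q^m \<and> q^m \<le> q*N"
proof -
  have "N < 2^N" by simp
  also have "(2::nat)^N \<le> q^N" using q by (intro power_mono) auto
  finally have ex: "\<exists>m. N \<le> q^m" by (intro exI[of _ N]) simp
  define m where "m = (LEAST m. N \<le> q^m)"
  have m1: "N \<le> q^m" unfolding m_def using LeastI_ex[OF ex] .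
  show ?thesis
  proof (cases m)
    case 0
    then show ?thesis using m1 N q by (intro exI[of _ m]) auto
  next
    case (Suc m')
    then have "\<not> N \<le> q^m'" using not_less_Least[of m' "\<lambda>m. N \<le> q^m"] unfolding m_def by simp
    then have "q^m \<le> q*N" using Suc by simp
    then show ?thesis using m1 by blast
  qed
qed

definition pts :: "nat list \<Rightarrow> (nat \<times> nat) set" where
  "pts \<sigma> = {(i, \<sigma>!i) | i. i < length \<sigma>}"

lemma pts_cont:
  assumes len: "length \<pi> = k" and setp: "set \<pi> = {1..k}"
    and c: "cont (\<lambda>i. \<pi>!i - 1) k (pts \<sigma>)"
  shows "contains \<sigma> \<pi>"
proof -
  define p where "p i = \<pi>!i - 1" for i
  from c obtain x y where xy: "smono k x" "smono k y" "\<forall>i<k. (x i, y (p i)) \<in> pts \<sigma>"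
    unfolding cont_def p_def by blast
  have xl: "x i < length \<sigma>" and sx: "\<sigma> ! (x i) = y (p i)" if "i < k" for i
    using xy(3) that unfolding pts_def by auto
  have pk: "p i < k" and pp: "\<pi>!i = p i + 1" if "i < k" for i
  proof -
    have "\<pi>!i \<in> {1..k}" using that len setp by (metis nth_mem)
    then show "p i < k" "\<pi>!i = p i + 1" unfolding p_def by auto
  qed
  define "is" where "is = map x [0..<k]"
  have "length is = length \<pi>" unfolding is_def using len by simp
  moreover have "sorted_wrt (<) is" unfolding is_def sorted_wrt_map
    using xy(1) unfolding smono_def by (auto simp: sorted_wrt_iff_nth_less)
  moreover have "\<forall>j\<in>set is. j < length \<sigma>" unfolding is_def using xl by auto
  moreover have "\<forall>a<length \<pi>. \<forall>b<length \<pi>.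
            (\<sigma> ! (is ! a) < \<sigma> ! (is ! b) \<longleftrightarrow> \<pi> ! a < \<pi> ! b) \<and>
            (\<sigma> ! (is ! a) = \<sigma> ! (is ! b) \<longleftrightarrow> \<pi> ! a = \<pi> ! b)"
  proof (intro allI impI)
    fix a b assume ab: "a < length \<pi>" "b < length \<pi>"
    then have ab': "a < k" "b < k" using len by auto
    have "is ! a = x a" "is ! b = x b" unfolding is_def using ab' by auto
    then show "(\<sigma> ! (is ! a) < \<sigma> ! (is ! b) \<longleftrightarrow> \<pi> ! a < \<pi> ! b) \<and>
            (\<sigma> ! (is ! a) = \<sigma> ! (is ! b) \<longleftrightarrow> \<pi> ! a = \<pi> ! b)"
      using sx[OF ab'(1)] sx[OF ab'(2)] pp[OF ab'(1)] pp[OF ab'(2)]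
        smono_less_iff[OF xy(2) pk[OF ab'(1)] pk[OF ab'(2)]]
        smono_eq_iff[OF xy(2) pk[OF ab'(1)] pk[OF ab'(2)]]
      by simp
  qed
  ultimately show ?thesis unfolding contains_def by blast
qed

theorem corollary9:
  fixes \<pi> :: "nat list" and k :: nat
  assumes "distinct \<pi>" and "set \<pi> = {1..k}"
  shows "\<exists>e :: real. \<forall>n l. 1 \<le> n \<longrightarrow> n \<le> l \<longrightarrow>
           (\<forall>\<mu> :: nat \<Rightarrow> nat. (\<forall>i\<in>{1..n}. \<mu> i > 0) \<longrightarrow> (\<Sum>i=1..n. \<mu> i) = l \<longrightarrow>
              real (s_count n \<mu> \<pi>) \<le> e ^ l) \<and>
           real (w_count l n \<pi>) \<le> e ^ l"
proof -
  have len: "length \<pi> = k" using distinct_card[OF assms(1)] assms(2) by simp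
  define p where "p i = \<pi>!i - 1" for i
  define r where "r j = (LEAST i. \<pi>!i = Suc j)" for j
  have rprop: "r j \<le> i \<and> \<pi>!(r j) = Suc j" if "\<pi>!i = Suc j" for i j
    unfolding r_def using that by (metis (mono_tags) LeastI Least_le)
  have ip: "ipair p r k" unfolding ipair_def
  proof (intro allI impI conjI)
    fix i assume i: "i < k"
    have pi: "\<pi>!i \<in> {1..k}" using i len assms(2) by (metis nth_mem)
    then show "p i < k" unfolding p_def by auto
    have "Suc i \<in> set \<pi>" using i assms(2) by auto
    then obtain i' where i': "i' < k" "\<pi>!i' = Suc i" using len by (metis in_set_conv_nth)
    then show "r i < k" using rprop[OF i'(2)] by linarith
    show "p (r i) = i" unfolding p_def using rprop[OF i'(2)] by simp
    have "\<pi>!i = Suc (p i)" using pi unfolding p_def by auto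
    then have "r (p i) \<le> i" "\<pi>!(r (p i)) = \<pi>!i" using rprop by metis+
    then show "r (p i) = i" using i len assms(1) nth_eq_iff_index_eq
      by (metis order_le_less_trans)
  qed
  define q :: nat where "q = k^2 + 2"
  define c :: nat where "c = 2*q^2*((k-1)*(q choose k)) + 1"
  have q2: "2 \<le> q" unfolding q_def by simp
  have c1: "1 \<le> c" unfolding c_def by simp
  have hc: "(k-1)^2*c + 2*q^2*((k-1)*(q choose k)) \<le> c*q"
  proof -
    have "(k-1)^2 \<le> k^2" using power_mono[of "k-1" k 2] by simp
    then have "(k-1)^2 + 1 \<le> q" unfolding q_def by linarith
    then have "((k-1)^2 + 1) * c \<le> q * c" by (rule mult_le_mono1)
    then have "(k-1)^2 * c + c \<le> c * q" by (metis add_mult_distrib mult.commute mult_1_left)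
    moreover have "2*q^2*((k-1)*(q choose k)) < c" unfolding c_def by simp
    ultimately show ?thesis by linarith
  qed
  define D :: nat where "D = 2^(q^2*c+1)"
  have D1: "1 \<le> D" unfolding D_def by simp
  have AvB: "card (Av p k (q^m)) \<le> D^(q^m)" for m
    unfolding D_def using count_bound[OF ip q2 c1 hc] .
  have wb: "w_count l n \<pi> \<le> D^(2*q*l)" if nl: "1 \<le> n" "n \<le> l" for n l :: nat
  proof -
    define Wd where "Wd = {\<sigma>. length \<sigma> = l \<and> set \<sigma> \<subseteq> {1..n} \<and> avoids \<sigma> \<pi>}"
    have "pts ` Wd \<subseteq> Av p k (l+1)"
    proof
      fix P assume "P \<in> pts ` Wd"
      then obtain \<sigma> where s: "\<sigma> \<in> Wd" "P = pts \<sigma>" by blast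
      have "\<forall>i<length \<sigma>. \<sigma>!i \<le> l" using s(1) nl unfolding Wd_def
        by (metis atLeastAtMost_iff le_trans nth_mem subset_iff mem_Collect_eq)
      then have "pts \<sigma> \<subseteq> {..<l+1}\<times>{..<l+1}" using s(1) unfolding pts_def Wd_def by auto
      moreover have "\<not> cont p k (pts \<sigma>)" using s(1) pts_cont[OF len assms(2)]
        unfolding Wd_def avoids_def p_def by blast
      ultimately show "P \<in> Av p k (l+1)" using s(2) unfolding Av_def by simp
    qed
    moreover have "inj_on pts Wd"
    proof (rule inj_onI)
      fix s t assume st: "s \<in> Wd" "t \<in> Wd" "pts s = pts t"
      have "length s = length t" using st unfolding Wd_def by simp
      moreover have "s!i = t!i" if "i < length s" for i
      proof -
        have "(i, s!i) \<in> pts t" using st(3) that unfolding pts_def by auto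
        then show ?thesis unfolding pts_def by auto
      qed
      ultimately show "s = t" by (simp add: nth_equalityI)
    qed
    ultimately have "card Wd \<le> card (Av p k (l+1))"
      by (metis card_inj_on_le finite_Av)
    moreover obtain m where m: "l+1 \<le> q^m" "q^m \<le> q*(l+1)" using exists_pow_between[OF q2, of "l+1"] by auto
    moreover have "card (Av p k (l+1)) \<le> card (Av p k (q^m))"
      using m(1) by (intro card_mono finite_Av Av_mono)
    moreover have "D^(q^m) \<le> D^(2*q*l)"
    proof -
      have "q*(l+1) \<le> q*(2*l)" using nl by (intro mult_le_mono2) linarith
      then have h: "q*(l+1) \<le> 2*q*l" by (simp add: algebra_simps)
      show ?thesis by (rule power_increasing[OF le_trans[OF m(2) h] D1])
    qed
    ultimately have "card Wd \<le> D^(2*q*l)" using AvB[of m] by linarith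
    then show ?thesis unfolding w_count_def Wd_def .
  qed
  have sb: "s_count n \<mu> \<pi> \<le> w_count l n \<pi>" if nl: "1 \<le> n" "n \<le> l" and mu: "(\<Sum>i=1..n. \<mu> i) = l"
    for n l :: nat and \<mu> :: "nat \<Rightarrow> nat"
  proof -
    have "{\<sigma> \<in> multiset_perms n \<mu>. avoids \<sigma> \<pi>} \<subseteq> {\<sigma>. length \<sigma> = l \<and> set \<sigma> \<subseteq> {1..n} \<and> avoids \<sigma> \<pi>}"
    proof
      fix \<sigma> assume s: "\<sigma> \<in> {\<sigma> \<in> multiset_perms n \<mu>. avoids \<sigma> \<pi>}"
      then have ss: "set \<sigma> \<subseteq> {1..n}" and cnt: "\<forall>i\<in>{1..n}. count_list \<sigma> i = \<mu> i"
        unfolding multiset_perms_def by auto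
      have "length \<sigma> = sum (count_list \<sigma>) {1..n}" using sum_count_set[OF ss] by simp
      also have "\<dots> = l" using cnt mu by simp
      finally show "\<sigma> \<in> {\<sigma>. length \<sigma> = l \<and> set \<sigma> \<subseteq> {1..n} \<and> avoids \<sigma> \<pi>}" using s ss by simp
    qed
    moreover have "finite {\<sigma>. length \<sigma> = l \<and> set \<sigma> \<subseteq> {1..n} \<and> avoids \<sigma> \<pi>}"
      by (rule finite_subset[OF _ finite_lists_length_eq[of "{1..n}" l]]) auto
    ultimately show ?thesis unfolding s_count_def w_count_def by (rule card_mono[rotated])
  qed
  show ?thesis
  proof (intro exI[of _ "real (D^(2*q))"] allI impI conjI)
    fix n l :: nat and \<mu> :: "nat \<Rightarrow> nat"
    assume nl: "1 \<le> n" "n \<le> l" and "\<forall>i\<in>{1..n}. 0 < \<mu> i" and mu: "(\<Sum>i=1..n. \<mu> i) = l"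
    have "s_count n \<mu> \<pi> \<le> D^(2*q*l)" using sb[OF nl mu] wb[OF nl] by linarith
    then show "real (s_count n \<mu> \<pi>) \<le> real (D^(2*q)) ^ l"
      by (metis of_nat_le_iff of_nat_power power_mult)
  next
    fix n l :: nat assume nl: "1 \<le> n" "n \<le> l"
    then show "real (w_count l n \<pi>) \<le> real (D^(2*q)) ^ l"
      using wb[OF nl] by (metis of_nat_le_iff of_nat_power power_mult)
  qed
qed


end
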